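(* Let $H$ be a Hilbert space and $U_{ik}\in B(H)$, $i,k=1,\dots,n$, operators satisfying relations (R1)–(R5). Then for all $i,j,k,l$ with $i\neq j$ and $k\neq l$, $$U_{ik}U_{jl}=\omega_{ji}\omega_{kl}U_{jl}U_{ik}.$$
   Context: $n\ge2$, $\theta\in M_n(\mathbb R)$ skew-symmetric, $\omega_{ij}=e^{2\pi i\theta_{ij}}$. Relations, for all $i,j,k,l\in\{1,\dots,n\}$: (R1) $U_{ik}U_{jl}+\omega_{ji}U_{jk}U_{il}=\omega_{kl}U_{il}U_{jk}+\omega_{ji}\omega_{kl}U_{jl}U_{ik}$; (R2) $\sum_iU_{ik}U_{il}^*=\delta_{kl}1$; (R3) $\sum_iU_{il}^*U_{ik}=\delta_{kl}1$; (R4) $U_{jk}U_{ik}^*=0$ for $i\neq j$; (R5) $U_{ik}^*U_{jk}=0$ for $i\neq j$. *)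

theory Defs
  imports Complex_Main
begin

text \<open>The inner product is linear in the second and conjugate-linear in the first argument.\<close>

class complex_vector = ab_group_add +
  fixes scaleC :: "complex \<Rightarrow> 'a \<Rightarrow> 'a" (infixr \<open>*\<^sub>C\<close> 75)
  assumes scaleC_add_right: "a *\<^sub>C (x + y) = a *\<^sub>C x + a *\<^sub>C y"
    and scaleC_add_left: "(a + b) *\<^sub>C x = a *\<^sub>C x + b *\<^sub>C x"
    and scaleC_scaleC: "a *\<^sub>C (b *\<^sub>C x) = (a * b) *\<^sub>C x"
    and scaleC_one: "1 *\<^sub>C x = x"

class complex_inner = complex_vector +
  fixes cinner :: "'a \<Rightarrow> 'a \<Rightarrow> complex"
  assumes cinner_conj: "cinner x y = cnj (cinner y x)"
    and cinner_add_right: "cinner x (y + z) = cinner x y + cinner x z"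
    and cinner_scaleC_right: "cinner x (a *\<^sub>C y) = a * cinner x y"
    and cinner_nonneg: "0 \<le> Re (cinner x x)"
    and cinner_zero_iff: "cinner x x = 0 \<longleftrightarrow> x = 0"

definition cnorm :: "'a::complex_inner \<Rightarrow> real" where
  "cnorm x = sqrt (Re (cinner x x))"

class chilbert_space = complex_inner +
  assumes chilbert_complete:
    "\<forall>X::nat \<Rightarrow> 'a.
       (\<forall>e>0. \<exists>N. \<forall>m\<ge>N. \<forall>n\<ge>N. sqrt (Re (cinner (X m - X n) (X m - X n))) < e)
       \<longrightarrow> (\<exists>L. \<forall>e>0. \<exists>N. \<forall>n\<ge>N. sqrt (Re (cinner (X n - L) (X n - L))) < e)"

definition bounded_op :: "('a::complex_inner \<Rightarrow> 'a) \<Rightarrow> bool" where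
  "bounded_op T \<longleftrightarrow> (\<forall>x y. T (x + y) = T x + T y) \<and> (\<forall>c x. T (c *\<^sub>C x) = c *\<^sub>C T x)
                     \<and> (\<exists>K. \<forall>x. cnorm (T x) \<le> K * cnorm x)"

definition is_adjoint :: "('a::complex_inner \<Rightarrow> 'a) \<Rightarrow> ('a \<Rightarrow> 'a) \<Rightarrow> bool" where
  "is_adjoint T S \<longleftrightarrow> (\<forall>x y. cinner (T x) y = cinner x (S y))"

definition omega :: "(nat \<Rightarrow> nat \<Rightarrow> real) \<Rightarrow> nat \<Rightarrow> nat \<Rightarrow> complex" where
  "omega \<theta> i j = exp (2 * of_real pi * \<i> * of_real (\<theta> i j))"

end

theory Submission
  imports Defs
begin

lemma scaleC_zero_r: "c *\<^sub>C (0::'a::complex_vector) = 0"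
proof -
  have "c *\<^sub>C (0::'a) = c *\<^sub>C (0 + 0)" by simp
  also have "\<dots> = c *\<^sub>C 0 + c *\<^sub>C 0" by (rule scaleC_add_right)
  finally show ?thesis by simp
qed

lemma cinner_zero_r: "cinner x (0::'a::complex_inner) = 0"
proof -
  have "cinner x (0::'a) = cinner x (0 + 0)" by simp
  also have "\<dots> = cinner x 0 + cinner x 0" by (rule cinner_add_right)
  finally show ?thesis by simp
qed

lemma cinner_zero_l: "cinner (0::'a::complex_inner) x = 0"
  by (subst cinner_conj) (simp add: cinner_zero_r)

lemma cinner_diff_r: "cinner x (y - z) = cinner x y - cinner x (z::'a::complex_inner)"
proof -
  have "cinner x y = cinner x ((y - z) + z)" by simp
  also have "\<dots> = cinner x (y - z) + cinner x z" by (rule cinner_add_right)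
  finally show ?thesis by simp
qed

lemma cinner_ext: assumes "\<And>y. cinner y u = cinner y (v::'a::complex_inner)" shows "u = v"
proof -
  have "cinner (u - v) (u - v) = 0" using assms[of "u-v"] by (simp add: cinner_diff_r)
  then have "u - v = 0" using cinner_zero_iff by blast
  then show ?thesis by simp
qed

lemma adj_flip: assumes "is_adjoint T S" shows "cinner z (T w) = cinner (S z) w"
proof -
  have "cinner z (T w) = cnj (cinner (T w) z)" by (rule cinner_conj)
  also have "\<dots> = cnj (cinner w (S z))" using assms unfolding is_adjoint_def by simp
  also have "\<dots> = cinner (S z) w" by (subst cinner_conj[of w]) simp
  finally show ?thesis .
qed

lemma adj_add': assumes "is_adjoint T S" shows "S (a + b) = S a + S b"
proof (rule cinner_ext)
  fix y
  have h: "\<And>x y. cinner (T x) y = cinner x (S y)" using assms unfolding is_adjoint_def by blast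
  have "cinner y (S (a + b)) = cinner (T y) (a + b)" by (simp add: h)
  also have "\<dots> = cinner (T y) a + cinner (T y) b" by (rule cinner_add_right)
  also have "\<dots> = cinner y (S a + S b)" by (simp add: h cinner_add_right)
  finally show "cinner y (S (a + b)) = cinner y (S a + S b)" .
qed

lemma adj_scale: assumes "is_adjoint T S" shows "S (c *\<^sub>C a) = c *\<^sub>C S a"
proof (rule cinner_ext)
  fix y
  have h: "\<And>x y. cinner (T x) y = cinner x (S y)" using assms unfolding is_adjoint_def by blast
  have "cinner y (S (c *\<^sub>C a)) = cinner (T y) (c *\<^sub>C a)" by (simp add: h)
  also have "\<dots> = c * cinner (T y) a" by (rule cinner_scaleC_right)
  also have "\<dots> = cinner y (c *\<^sub>C S a)" by (simp add: h cinner_scaleC_right)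
  finally show "cinner y (S (c *\<^sub>C a)) = cinner y (c *\<^sub>C S a)" .
qed

lemma adj_zero: assumes "is_adjoint T S" shows "S 0 = 0"
  using adj_add'[OF assms, of 0 0] by simp

lemma adj_diff: assumes "is_adjoint T S" shows "S (a - b) = S a - S b"
  using adj_add'[OF assms, of "a - b" b] by (simp add: eq_diff_eq)

lemma bnd_zero: assumes "bounded_op T" shows "T 0 = 0"
proof -
  have "T 0 = T (0 + 0)" by simp
  also have "\<dots> = T 0 + T 0" using assms unfolding bounded_op_def by blast
  finally show ?thesis by simp
qed

lemma additive_sum:
  assumes "\<And>x y. f (x + y) = f x + f y" "f 0 = 0"
  shows "f (\<Sum>i\<in>A. g i) = (\<Sum>i\<in>A. f (g i))"
proof (cases "finite A")
  case True then show ?thesis by (induction A rule: finite_induct) (auto simp: assms)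
qed (simp add: assms)

lemma sum_single:
  assumes "a \<in> A" "finite A" "\<And>i. i \<in> A \<Longrightarrow> i \<noteq> a \<Longrightarrow> h i = 0"
  shows "(\<Sum>i\<in>A. h i) = (h a :: 'a::comm_monoid_add)"
proof -
  have "(\<Sum>i\<in>A. h i) = h a + (\<Sum>i\<in>A - {a}. h i)" using assms by (simp add: sum.remove)
  also have "(\<Sum>i\<in>A - {a}. h i) = 0" using assms by (intro sum.neutral) auto
  finally show ?thesis by simp
qed

theorem proposition3p16:
  fixes n :: nat and \<theta> :: "nat \<Rightarrow> nat \<Rightarrow> real"
    and U Us :: "nat \<Rightarrow> nat \<Rightarrow> 'h::chilbert_space \<Rightarrow> 'h"
  assumes n2: "n \<ge> 2"
    and skew: "\<forall>i\<in>{1..n}. \<forall>j\<in>{1..n}. \<theta> i j = - \<theta> j i"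
    and bnd: "\<forall>i\<in>{1..n}. \<forall>k\<in>{1..n}. bounded_op (U i k)"
    and adj: "\<forall>i\<in>{1..n}. \<forall>k\<in>{1..n}. is_adjoint (U i k) (Us i k)"
    and R1: "\<forall>i\<in>{1..n}. \<forall>j\<in>{1..n}. \<forall>k\<in>{1..n}. \<forall>l\<in>{1..n}. \<forall>x.
              U i k (U j l x) + omega \<theta> j i *\<^sub>C U j k (U i l x)
              = omega \<theta> k l *\<^sub>C U i l (U j k x)
                + (omega \<theta> j i * omega \<theta> k l) *\<^sub>C U j l (U i k x)"
    and R2: "\<forall>k\<in>{1..n}. \<forall>l\<in>{1..n}. \<forall>x.
              (\<Sum>i\<in>{1..n}. U i k (Us i l x)) = (if k = l then x else 0)"
    and R3: "\<forall>k\<in>{1..n}. \<forall>l\<in>{1..n}. \<forall>x.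
              (\<Sum>i\<in>{1..n}. Us i l (U i k x)) = (if k = l then x else 0)"
    and R4: "\<forall>i\<in>{1..n}. \<forall>j\<in>{1..n}. \<forall>k\<in>{1..n}. i \<noteq> j \<longrightarrow> (\<forall>x. U j k (Us i k x) = 0)"
    and R5: "\<forall>i\<in>{1..n}. \<forall>j\<in>{1..n}. \<forall>k\<in>{1..n}. i \<noteq> j \<longrightarrow> (\<forall>x. Us i k (U j k x) = 0)"
  shows "\<forall>i\<in>{1..n}. \<forall>j\<in>{1..n}. \<forall>k\<in>{1..n}. \<forall>l\<in>{1..n}. i \<noteq> j \<longrightarrow> k \<noteq> l \<longrightarrow>
           (\<forall>x. U i k (U j l x) = (omega \<theta> j i * omega \<theta> k l) *\<^sub>C U j l (U i k x))"
proof -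
  have Uadd: "U a k (x + y) = U a k x + U a k y" if "a \<in> {1..n}" "k \<in> {1..n}" for a k x y
    using bnd that unfolding bounded_op_def by blast
  have U0: "U a k 0 = 0" if "a \<in> {1..n}" "k \<in> {1..n}" for a k
    using bnd that bnd_zero by blast
  have Usadd: "Us a k (x + y) = Us a k x + Us a k y" if "a \<in> {1..n}" "k \<in> {1..n}" for a k x y
    using adj that adj_add' by blast
  have Us0: "Us a k 0 = 0" if "a \<in> {1..n}" "k \<in> {1..n}" for a k
    using adj that adj_zero by blast
  have L1: "U a k z = U a k (Us a k (U a k z))" if a: "a \<in> {1..n}" and k: "k \<in> {1..n}" for a k z
  proof -
    have "z = (\<Sum>i\<in>{1..n}. Us i k (U i k z))" using R3 k by simp
    then have "U a k z = U a k (\<Sum>i\<in>{1..n}. Us i k (U i k z))" by (rule arg_cong)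
    also have "\<dots> = (\<Sum>i\<in>{1..n}. U a k (Us i k (U i k z)))"
      by (rule additive_sum[OF Uadd[OF a k] U0[OF a k]])
    also have "\<dots> = U a k (Us a k (U a k z))"
      by (rule sum_single) (use a k R4[rule_format, of _ a k] in auto)
    finally show ?thesis .
  qed
  have Row: "Us a l (U a k z) = 0" if a: "a \<in> {1..n}" and k: "k \<in> {1..n}" and l: "l \<in> {1..n}"
    and kl: "k \<noteq> l" for a k l z
  proof -
    have "\<forall>w. Us a l (U a k (Us a k w)) = 0"
    proof
      fix w
      have "0 = (\<Sum>i\<in>{1..n}. Us i l (U i k (Us a k w)))" using R3 k l kl by simp
      also have "\<dots> = Us a l (U a k (Us a k w))"
        by (rule sum_single) (use a k l R4[rule_format, of a _ k] Us0 in auto)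
      finally show "Us a l (U a k (Us a k w)) = 0" by simp
    qed
    then show ?thesis using L1[OF a k, of z] by metis
  qed
  show ?thesis
  proof (intro ballI impI allI)
    fix i j k l x
    assume i: "i \<in> {1..n}" and j: "j \<in> {1..n}" and k: "k \<in> {1..n}" and l: "l \<in> {1..n}"
      and ij: "i \<noteq> j" and kl: "k \<noteq> l"
    define \<omega> where "\<omega> = omega \<theta> j i * omega \<theta> k l"
    define A where "A = U i k (U j l x)"
    define D where "D = U j l (U i k x)"
    define E where "E = A - \<omega> *\<^sub>C D"
    have r1: "A + omega \<theta> j i *\<^sub>C U j k (U i l x) = omega \<theta> k l *\<^sub>C U i l (U j k x) + \<omega> *\<^sub>C D"
      unfolding A_def D_def \<omega>_def by (rule R1[rule_format, OF i j k l])
    have sik: "is_adjoint (U i k) (Us i k)" and sjl: "is_adjoint (U j l) (Us j l)"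
      using adj i j k l by auto
    have e1: "Us i k E = 0"
    proof -
      have "Us i k (A + omega \<theta> j i *\<^sub>C U j k (U i l x)) = Us i k A"
        using adj_add'[OF sik] adj_scale[OF sik] R5[rule_format, OF i j k ij] scaleC_zero_r by simp
      moreover have "Us i k (omega \<theta> k l *\<^sub>C U i l (U j k x) + \<omega> *\<^sub>C D) = \<omega> *\<^sub>C Us i k D"
        using adj_add'[OF sik] adj_scale[OF sik] Row[OF i l k] kl scaleC_zero_r by simp
      ultimately have "Us i k A = \<omega> *\<^sub>C Us i k D" using r1 by simp
      then show ?thesis unfolding E_def using adj_diff[OF sik] adj_scale[OF sik] by simp
    qed
    have e2: "Us j l E = 0"
    proof -
      have "Us j l (A + omega \<theta> j i *\<^sub>C U j k (U i l x)) = Us j l A"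
        using adj_add'[OF sjl] adj_scale[OF sjl] Row[OF j k l] kl scaleC_zero_r by simp
      moreover have "Us j l (omega \<theta> k l *\<^sub>C U i l (U j k x) + \<omega> *\<^sub>C D) = \<omega> *\<^sub>C Us j l D"
        using adj_add'[OF sjl] adj_scale[OF sjl] R5[rule_format, OF j i l not_sym[OF ij]] scaleC_zero_r by simp
      ultimately have "Us j l A = \<omega> *\<^sub>C Us j l D" using r1 by simp
      then show ?thesis unfolding E_def using adj_diff[OF sjl] adj_scale[OF sjl] by simp
    qed
    have "cinner E E = cinner E (A - \<omega> *\<^sub>C D)" unfolding E_def[symmetric] ..
    also have "\<dots> = cinner E A - \<omega> * cinner E D"
      by (simp only: cinner_diff_r cinner_scaleC_right)
    also have "cinner E A = 0" unfolding A_def adj_flip[OF sik] e1 cinner_zero_l ..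
    also have "cinner E D = 0" unfolding D_def adj_flip[OF sjl] e2 cinner_zero_l ..
    finally have "cinner E E = 0" by simp
    then have "E = 0" using cinner_zero_iff by blast
    then show "U i k (U j l x) = (omega \<theta> j i * omega \<theta> k l) *\<^sub>C U j l (U i k x)"
      unfolding E_def A_def D_def \<omega>_def by simp
  qed
qed

end
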